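(* Let $0<\delta<1$, let $r\ge2$ be an integer, and let $G$ be an $(n,d,\lambda)$-graph with $\lambda<\delta d$. Then, with activation threshold $r$, every set of vertices of size larger than $\frac{(r-1)n}{(1-\delta)d}$ is contagious.
   Context: Bootstrap percolation with threshold $r\ge 2$ on a graph $G=(V,E)$: given a set $A_0\subseteq V$ of seeds, define for $i\ge1$ $A_i=A_{i-1}\cup\{v:|N(v)\cap A_{i-1}|\ge r\}$, where $N(v)$ is the set of neighbors of $v$, and $\langle A_0\rangle=\bigcup_i A_i$. The set $A_0$ is contagious if $\langle A_0\rangle=V$. An $(n,d,\lambda)$-graph is a $d$-regular graph on $n$ vertices whose adjacency eigenvalues $d=\lambda_1\ge\lambda_2\ge\dots\ge\lambda_n$ satisfy $\max\{|\lambda_2|,|\lambda_n|\}\le\lambda$. *)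

theory Defs
  imports Jordan_Normal_Form.Char_Poly
begin

definition simple_graph :: "nat \<Rightarrow> (nat \<Rightarrow> nat \<Rightarrow> bool) \<Rightarrow> bool" where
  "simple_graph n E \<longleftrightarrow>
     (\<forall>u v. E u v \<longrightarrow> u < n \<and> v < n) \<and>
     (\<forall>u v. E u v \<longrightarrow> E v u) \<and> (\<forall>v. \<not> E v v)"

definition nbhd :: "(nat \<Rightarrow> nat \<Rightarrow> bool) \<Rightarrow> nat \<Rightarrow> nat set" where
  "nbhd E v = {u. E v u}"

definition regular :: "nat \<Rightarrow> (nat \<Rightarrow> nat \<Rightarrow> bool) \<Rightarrow> nat \<Rightarrow> bool" where
  "regular n E d \<longleftrightarrow> (\<forall>v<n. card (nbhd E v) = d)"

definition adj_mat :: "nat \<Rightarrow> (nat \<Rightarrow> nat \<Rightarrow> bool) \<Rightarrow> real mat" where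
  "adj_mat n E = mat n n (\<lambda>(i, j). if E i j then 1 else 0)"

text \<open>(n,d,lambda)-graph: d-regular simple graph on n vertices whose adjacency
  eigenvalues (with multiplicity, in non-increasing order) d = l_1 >= ... >= l_n
  satisfy max(|l_2|, |l_n|) <= lambda, i.e. |l_i| <= lambda for 2 <= i <= n.\<close>

definition nd_lambda_graph ::
  "nat \<Rightarrow> nat \<Rightarrow> real \<Rightarrow> (nat \<Rightarrow> nat \<Rightarrow> bool) \<Rightarrow> bool" where
  "nd_lambda_graph n d lam E \<longleftrightarrow>
     simple_graph n E \<and> regular n E d \<and>
     (\<exists>ls :: real list. length ls = n \<and> sorted_wrt (\<ge>) ls \<and>
        char_poly (adj_mat n E) = (\<Prod>a\<leftarrow>ls. [:- a, 1:]) \<and>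
        ls ! 0 = real d \<and>
        (\<forall>i. 1 \<le> i \<and> i < n \<longrightarrow> \<bar>ls ! i\<bar> \<le> lam))"

definition boot_step ::
  "nat \<Rightarrow> nat \<Rightarrow> (nat \<Rightarrow> nat \<Rightarrow> bool) \<Rightarrow> nat set \<Rightarrow> nat set" where
  "boot_step n r E A = A \<union> {v \<in> {0..<n}. card (nbhd E v \<inter> A) \<ge> r}"

definition boot_closure ::
  "nat \<Rightarrow> nat \<Rightarrow> (nat \<Rightarrow> nat \<Rightarrow> bool) \<Rightarrow> nat set \<Rightarrow> nat set" where
  "boot_closure n r E A0 = (\<Union>i. (boot_step n r E ^^ i) A0)"

definition contagious ::
  "nat \<Rightarrow> nat \<Rightarrow> (nat \<Rightarrow> nat \<Rightarrow> bool) \<Rightarrow> nat set \<Rightarrow> bool" where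
  "contagious n r E A0 \<longleftrightarrow> boot_closure n r E A0 = {0..<n}"

end

theory Submission
  imports Defs
begin

definition hh :: "nat \<Rightarrow> real vec \<Rightarrow> real mat" where
  "hh n w = mat n n (\<lambda>(i,j). (if i = j then 1 else 0) - 2 / (w \<bullet> w) * w $ i * w $ j)"

lemma mult_if_delta: "(if P then (1::real) else 0) * x = (if P then x else 0)" "x * (if P then (1::real) else 0) = (if P then x else 0)" by auto

lemma hh_carrier[simp]: "hh n w \<in> carrier_mat n n" by (simp add: hh_def)

lemma hh_transpose: "transpose_mat (hh n w) = hh n w"
  by (rule eq_matI, auto simp: hh_def)

lemma hh_square:
  assumes w: "w \<in> carrier_vec n"
  shows "hh n w * hh n w = 1\<^sub>m n"
proof (rule eq_matI)
  fix i j assume i: "i < dim_row (1\<^sub>m n)" and j: "j < dim_col (1\<^sub>m n)"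
  define c where "c = 2 / (w \<bullet> w)"
  have ww: "w \<bullet> w = (\<Sum>k<n. w $ k * w $ k)" using w
    by (simp add: scalar_prod_def lessThan_atLeast0)
  have "(hh n w * hh n w) $$ (i,j) = (\<Sum>k<n. ((if i = k then 1 else 0) - c * w$i * w$k) * ((if k = j then 1 else 0) - c * w$k * w$j))"
    using i j by (simp add: hh_def scalar_prod_def row_def col_def c_def lessThan_atLeast0)
  also have "\<dots> = (\<Sum>k<n. (if i = k then 1 else 0) * (if k = j then 1 else 0))
      - (\<Sum>k<n. (if i = k then 1 else 0) * (c * w$k * w$j))
      - (\<Sum>k<n. (c * w$i * w$k) * (if k = j then 1 else 0))
      + (c * c * w$i * w$j) * (\<Sum>k<n. w $ k * w $ k)"
    by (simp add: algebra_simps sum_subtractf sum.distrib sum_distrib_left)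
  also have "\<dots> = (if i = j then 1 else 0) - 2 * c * w$i * w$j + c * c * w$i * w$j * (w \<bullet> w)"
    using i j by (simp add: ww mult_if_delta)
  also have "\<dots> = (if i = j then 1 else 0)"
  proof (cases "w \<bullet> w = 0")
    case True thus ?thesis by (simp add: c_def)
  next
    case False thus ?thesis by (simp add: c_def field_simps)
  qed
  finally show "(hh n w * hh n w) $$ (i,j) = 1\<^sub>m n $$ (i,j)" using i j by simp
qed (auto simp: hh_def)

lemma mult_unit_vec_index:
  assumes "M \<in> carrier_mat n n" "i < n" "j < n"
  shows "(M *\<^sub>v unit_vec n j) $ i = (M $$ (i,j) :: real)"
proof -
  have "(M *\<^sub>v unit_vec n j) $ i = (\<Sum>k<n. M $$ (i,k) * (if k = j then 1 else 0))"
    using assms by (simp add: scalar_prod_def row_def lessThan_atLeast0 cong: if_cong)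
  also have "\<dots> = M $$ (i,j)" using assms by (simp add: mult_if_delta)
  finally show ?thesis .
qed

lemma self_scalar_pos:
  assumes "v \<in> carrier_vec n" "v \<noteq> 0\<^sub>v n"
  shows "(v \<bullet> v :: real) > 0"
proof -
  obtain k where k: "k < n" "v $ k \<noteq> 0"
  proof (rule ccontr)
    assume "\<not> thesis"
    hence "\<forall>k<n. v $ k = 0" using that by blast
    hence "v = 0\<^sub>v n" using assms(1) by (intro eq_vecI) auto
    thus False using assms(2) by simp
  qed
  have "v \<bullet> v = (\<Sum>i\<in>{0..<n}. v $ i * v $ i)" using assms by (simp add: scalar_prod_def)
  also have "\<dots> \<ge> v $ k * v $ k"
    by (rule member_le_sum[where f="\<lambda>i. v $ i * v $ i"], use k in auto)
  moreover have "v $ k * v $ k > 0" using k using not_real_square_gt_zero by blast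
  ultimately show ?thesis by linarith
qed


lemma hh_e0:
  assumes u: "u \<in> carrier_vec n" and uu: "u \<bullet> u = (1::real)" and n: "0 < n"
  shows "hh n (u - unit_vec n 0) *\<^sub>v unit_vec n 0 = u"
proof -
  define w where "w = u - unit_vec n 0"
  have w: "w \<in> carrier_vec n" using u by (simp add: w_def)
  have ww: "w \<bullet> w = - 2 * w $ 0"
  proof -
    have e: "unit_vec n 0 \<in> carrier_vec n" by simp
    have "w \<bullet> w = u \<bullet> (u - unit_vec n 0) - unit_vec n 0 \<bullet> (u - unit_vec n 0)"
      unfolding w_def by (rule minus_scalar_prod_distrib[OF u e], use u in simp)
    also have "\<dots> = (u \<bullet> u - u \<bullet> unit_vec n 0) - (unit_vec n 0 \<bullet> u - unit_vec n 0 \<bullet> unit_vec n 0)"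
      by (simp only: scalar_prod_minus_distrib[OF u u e] scalar_prod_minus_distrib[OF e u e])
    also have "\<dots> = 2 - 2 * u $ 0" using u n by (simp add: uu)
    finally show ?thesis using u n by (simp add: w_def)
  qed
  show ?thesis unfolding w_def[symmetric]
  proof (rule eq_vecI)
    fix i assume "i < dim_vec u"
    hence i: "i < n" using u by simp
    have "(hh n w *\<^sub>v unit_vec n 0) $ i = (if i = 0 then 1 else 0) - 2 / (w \<bullet> w) * w $ i * w $ 0"
      using i n by (subst mult_unit_vec_index[of _ n], auto simp: hh_def)
    also have "\<dots> = u $ i"
    proof (cases "w \<bullet> w = 0")
      case True
      hence "w $ 0 = 0" using ww by simp
      hence "w = 0\<^sub>v n" using True w self_scalar_pos[of w n] by force
      hence "u $ i = (if i = 0 then 1 else 0)" proof -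
        have "w $ i = 0" using \<open>w = 0\<^sub>v n\<close> i by simp
        thus ?thesis using i n u by (simp add: w_def)
      qed
      thus ?thesis using True by simp
    next
      case False
      hence "w $ 0 \<noteq> 0" using ww by simp
      hence "2 / (w \<bullet> w) * w $ 0 = -1" using ww by (simp add: field_simps)
      hence "2 / (w \<bullet> w) * w $ i * w $ 0 = - w $ i" by (metis mult.commute mult.left_commute mult_minus1)
      moreover have "w $ i = u $ i - (if i = 0 then 1 else 0)" using i n u by (simp add: w_def)
      ultimately show ?thesis by simp
    qed
    finally show "(hh n w *\<^sub>v unit_vec n 0) $ i = u $ i" .
  qed (use u in \<open>simp add: hh_def\<close>)
qed


definition dmat :: "nat \<Rightarrow> real list \<Rightarrow> real mat" where
  "dmat n es = mat n n (\<lambda>(i,j). if i = j then es ! i else 0)"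

lemma spectral:
  fixes A :: "real mat"
  assumes "A \<in> carrier_mat n n" "transpose_mat A = A" "char_poly A = (\<Prod>e\<leftarrow>es. [:- e, 1:])"
  shows "\<exists>U\<in>carrier_mat n n. transpose_mat U * U = 1\<^sub>m n \<and> transpose_mat U * A * U = dmat n es"
  using assms
proof (induct es arbitrary: n A)
  case Nil
  from degree_monic_char_poly[OF Nil(1)] Nil(3) have "n = 0" by simp
  thus ?case using Nil(1) by (intro bexI[of _ "1\<^sub>m 0"]) (auto intro!: eq_matI simp: dmat_def)
next
  case (Cons e es n A)
  have A: "A \<in> carrier_mat n n" and sym: "transpose_mat A = A" using Cons by auto
  have cp: "char_poly A = [:-e,1:] * (\<Prod>e\<leftarrow>es. [:- e, 1:])" using Cons(4) by simp
  have mon: "monic (\<Prod>e\<leftarrow>es. [:- e, 1:])" by (rule monic_prod_list, auto)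
  have "degree (char_poly A) = Suc (degree (\<Prod>e\<leftarrow>es. [:- e, 1:]))" unfolding cp
    by (subst degree_mult_eq, insert mon, auto)
  with degree_monic_char_poly[OF A] have n: "0 < n" by auto
  have "eigenvalue A e" unfolding eigenvalue_root_char_poly[OF A] cp by simp
  from find_eigenvector[OF A this] have ev: "eigenvector A (find_eigenvector A e) e" .
  define v where "v = find_eigenvector A e"
  have v: "v \<in> carrier_vec n" "v \<noteq> 0\<^sub>v n" and Av: "A *\<^sub>v v = e \<cdot>\<^sub>v v"
    using A ev unfolding eigenvector_def v_def by auto
  define u where "u = (1 / sqrt (v \<bullet> v)) \<cdot>\<^sub>v v"
  have vv: "v \<bullet> v > 0" by (rule self_scalar_pos[OF v])
  have u: "u \<in> carrier_vec n" using v by (simp add: u_def)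
  have uu: "u \<bullet> u = 1"
  proof -
    have "u \<bullet> u = (1 / sqrt (v \<bullet> v)) * ((1 / sqrt (v \<bullet> v)) * (v \<bullet> v))"
      unfolding u_def using v by simp
    also have "\<dots> = 1" using vv by (simp add: field_simps)
    finally show ?thesis .
  qed
  have Au: "A *\<^sub>v u = e \<cdot>\<^sub>v u" unfolding u_def using A v Av
    by (simp add: mult_mat_vec smult_smult_assoc mult.commute)
  define H where "H = hh n (u - unit_vec n 0)"
  have H: "H \<in> carrier_mat n n" by (simp add: H_def)
  have HT: "transpose_mat H = H" by (simp add: H_def hh_transpose)
  have HH: "H * H = 1\<^sub>m n" unfolding H_def by (rule hh_square, use u in simp)
  have He: "H *\<^sub>v unit_vec n 0 = u" unfolding H_def by (rule hh_e0[OF u uu n])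
  define A' where "A' = H * A * H"
  have A': "A' \<in> carrier_mat n n" using H A by (simp add: A'_def)
  have A'T: "transpose_mat A' = A'"
  proof -
    have "transpose_mat A' = transpose_mat H * transpose_mat (H * A)"
      unfolding A'_def by (rule transpose_mult[of _ n n], use H A in auto)
    also have "transpose_mat (H * A) = transpose_mat A * transpose_mat H"
      by (rule transpose_mult[of _ n n], use H A in auto)
    finally show ?thesis using H A by (simp add: HT sym A'_def)
  qed
  have Hu: "H *\<^sub>v u = unit_vec n 0"
  proof -
    have "H *\<^sub>v u = (H * H) *\<^sub>v unit_vec n 0" using H by (simp add: He[symmetric])
    thus ?thesis using HH by simp
  qed
  have A'e: "A' *\<^sub>v unit_vec n 0 = e \<cdot>\<^sub>v unit_vec n 0"
  proof -
    have "A' *\<^sub>v unit_vec n 0 = H *\<^sub>v (A *\<^sub>v (H *\<^sub>v unit_vec n 0))"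
      using H A by (simp add: A'_def assoc_mult_mat_vec[of _ n n _ n])
    also have "\<dots> = e \<cdot>\<^sub>v unit_vec n 0" using H u by (simp add: He Au mult_mat_vec Hu)
    finally show ?thesis .
  qed
  have col0: "A' $$ (i,0) = (if i = 0 then e else 0)" if i: "i < n" for i
  proof -
    have "A' $$ (i,0) = (A' *\<^sub>v unit_vec n 0) $ i" using mult_unit_vec_index[OF A' i n] by simp
    also have "\<dots> = (if i = 0 then e else 0)" using i n by (simp add: A'e)
    finally show ?thesis .
  qed
  have row0: "A' $$ (0,j) = (if j = 0 then e else 0)" if j: "j < n" for j
  proof -
    have "A' $$ (0,j) = transpose_mat A' $$ (0,j)" using A'T by simp
    also have "\<dots> = A' $$ (j,0)" using A' j n by simp
    finally show ?thesis using col0[OF j] by simp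
  qed
  obtain m where nm: "n = Suc m" using n by (cases n) auto
  define A3 where "A3 = mat m m (\<lambda>(i,j). A' $$ (Suc i, Suc j))"
  have A3: "A3 \<in> carrier_mat m m" by (simp add: A3_def)
  have A3T: "transpose_mat A3 = A3"
  proof (rule eq_matI)
    fix i j assume "i < dim_row A3" "j < dim_col A3"
    hence i: "i < m" and j: "j < m" by (auto simp: A3_def)
    have "A' $$ (Suc j, Suc i) = transpose_mat A' $$ (Suc i, Suc j)" using A' i j nm by simp
    thus "transpose_mat A3 $$ (i, j) = A3 $$ (i, j)" using i j A'T by (simp add: A3_def)
  qed (auto simp: A3_def)
  define A1 where "A1 = mat 1 1 (\<lambda>_. e)"
  have A1: "A1 \<in> carrier_mat 1 1" by (simp add: A1_def)
  have blk: "A' = four_block_mat A1 (0\<^sub>m 1 m) (0\<^sub>m m 1) A3"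
  proof (rule eq_matI)
    fix i j assume "i < dim_row (four_block_mat A1 (0\<^sub>m 1 m) (0\<^sub>m m 1) A3)"
      "j < dim_col (four_block_mat A1 (0\<^sub>m 1 m) (0\<^sub>m m 1) A3)"
    hence i: "i < Suc m" and j: "j < Suc m" by (auto simp: A1_def A3_def)
    show "A' $$ (i, j) = four_block_mat A1 (0\<^sub>m 1 m) (0\<^sub>m m 1) A3 $$ (i, j)"
    proof (cases "i = 0")
      case True thus ?thesis using row0[of j] i j nm by (simp add: A1_def A3_def)
    next
      case False
      then obtain i' where i': "i = Suc i'" by (cases i) auto
      show ?thesis
      proof (cases "j = 0")
        case True thus ?thesis using col0[of i] i j nm i' by (simp add: A1_def A3_def)
      next
        case False
        then obtain j' where j': "j = Suc j'" by (cases j) auto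
        show ?thesis using i j i' j' by (simp add: A1_def A3_def)
      qed
    qed
  qed (use A' nm in \<open>auto simp: A1_def A3_def\<close>)
  have "similar_mat_wit A' A H H"
    by (rule similar_mat_witI[of _ _ n], use HH A' A H in \<open>auto simp: A'_def\<close>)
  hence "char_poly A' = char_poly A" by (intro char_poly_similar) (auto simp: similar_mat_def)
  moreover have "char_poly A' = char_poly A1 * char_poly A3"
    unfolding blk by (rule char_poly_four_block_zeros_col[OF A1 _ A3], simp)
  moreover have "char_poly A1 = [:-e,1:]"
    by (simp add: A1_def char_poly_defs det_def sign_def)
  ultimately have "[:-e,1:] * char_poly A3 = [:-e,1:] * (\<Prod>e\<leftarrow>es. [:- e, 1:])" using cp by simp
  hence cp3: "char_poly A3 = (\<Prod>e\<leftarrow>es. [:- e, 1:])"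
    by (metis mult_cancel_left pCons_eq_0_iff zero_neq_one)
  from Cons(1)[OF A3 A3T cp3] obtain U3 where U3: "U3 \<in> carrier_mat m m"
    and U3U3: "transpose_mat U3 * U3 = 1\<^sub>m m" and U3D: "transpose_mat U3 * A3 * U3 = dmat m es" by blast
  define B where "B = four_block_mat (1\<^sub>m 1) (0\<^sub>m 1 m) (0\<^sub>m m 1) U3"
  have B: "B \<in> carrier_mat n n" using four_block_carrier_mat[OF one_carrier_mat[of 1] U3] nm by (simp add: B_def)
  have BT: "transpose_mat B = four_block_mat (1\<^sub>m 1) (0\<^sub>m 1 m) (0\<^sub>m m 1) (transpose_mat U3)"
    unfolding B_def by (subst transpose_four_block_mat[of _ 1 1 _ m _ m], use U3 in auto)
  have BB: "transpose_mat B * B = 1\<^sub>m n"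
    unfolding BT unfolding B_def nm
    by (subst mult_four_block_mat[of _ 1 1 _ m _ m], use U3 in \<open>auto simp: U3U3\<close>)
  have BAB: "transpose_mat B * A' * B = dmat n (e # es)"
  proof -
    have "transpose_mat B * A' * B = four_block_mat A1 (0\<^sub>m 1 m) (0\<^sub>m m 1) (transpose_mat U3 * A3 * U3)"
      unfolding BT unfolding B_def blk
      by (subst mult_four_block_mat[of _ 1 1 _ m _ m], use U3 A1 A3 in auto,
          subst mult_four_block_mat[of _ 1 1 _ m _ m], use U3 A1 A3 in auto)
    also have "\<dots> = dmat n (e # es)" unfolding U3D nm
      by (rule eq_matI) (auto simp: A1_def dmat_def)
    finally show ?thesis .
  qed
  define U where "U = H * B"
  have U: "U \<in> carrier_mat n n" using H B by (simp add: U_def)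
  have UT: "transpose_mat U = transpose_mat B * H"
    unfolding U_def by (subst transpose_mult[of _ n n], use H B in \<open>auto simp: HT\<close>)
  have BTc: "transpose_mat B \<in> carrier_mat n n" using B by simp
  have "transpose_mat U * U = transpose_mat B * H * (H * B)" unfolding UT unfolding U_def ..
  also have "\<dots> = transpose_mat B * (H * (H * B))" by (rule assoc_mult_mat[OF BTc H mult_carrier_mat[OF H B]])
  also have "H * (H * B) = (H * H) * B" by (rule assoc_mult_mat[OF H H B, symmetric])
  finally have "transpose_mat U * U = transpose_mat B * (1\<^sub>m n * B)" unfolding HH .
  hence UU: "transpose_mat U * U = 1\<^sub>m n" using BB B by simp
  have "transpose_mat U * A * U = transpose_mat B * H * A * (H * B)" unfolding UT unfolding U_def ..
  also have "\<dots> = transpose_mat B * (H * (A * (H * B)))"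
  proof -
    have HB: "H * B \<in> carrier_mat n n" using H B by simp
    have "transpose_mat B * H * A * (H * B) = (transpose_mat B * H) * (A * (H * B))"
      by (rule assoc_mult_mat[OF mult_carrier_mat[OF BTc H] A HB])
    also have "\<dots> = transpose_mat B * (H * (A * (H * B)))"
      by (rule assoc_mult_mat[OF BTc H mult_carrier_mat[OF A HB]])
    finally show ?thesis .
  qed
  also have "\<dots> = transpose_mat B * (H * A * H) * B"
  proof -
    have HB: "H * B \<in> carrier_mat n n" using H B by simp
    have HA: "H * A \<in> carrier_mat n n" using H A by simp
    have e1: "transpose_mat B * (H * A * H) * B = transpose_mat B * ((H * A * H) * B)"
      by (rule assoc_mult_mat[OF BTc mult_carrier_mat[OF HA H] B])
    have e2: "(H * A * H) * B = (H * A) * (H * B)" by (rule assoc_mult_mat[OF HA H B])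
    have e3: "(H * A) * (H * B) = H * (A * (H * B))" by (rule assoc_mult_mat[OF H A HB])
    show ?thesis unfolding e1 e2 e3 ..
  qed
  finally have "transpose_mat U * A * U = transpose_mat B * A' * B" unfolding A'_def .
  hence UAU: "transpose_mat U * A * U = dmat n (e # es)" using BAB by simp
  show ?case using UU UAU U by (intro bexI[of _ U]) simp_all
qed

lemma dmat_mult_vec_index:
  assumes "v \<in> carrier_vec n" "i < n"
  shows "(dmat n es *\<^sub>v v) $ i = es ! i * v $ i"
proof -
  have "(dmat n es *\<^sub>v v) $ i = (\<Sum>k\<in>{0..<n}. (if i = k then es ! i else 0) * v $ k)"
    using assms by (simp add: dmat_def scalar_prod_def row_def cong: if_cong)
  also have "\<dots> = (\<Sum>k\<in>{0..<n}. if i = k then es ! i * v $ k else 0)"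
    by (rule sum.cong) auto
  also have "\<dots> = es ! i * v $ i" using assms by simp
  finally show ?thesis .
qed

lemma quad_bound:
  fixes A :: "real mat" and ls :: "real list"
  assumes A: "A \<in> carrier_mat n n" and sym: "transpose_mat A = A"
    and cp: "char_poly A = (\<Prod>e\<leftarrow>ls. [:- e, 1:])"
    and n: "0 < n"
    and reg: "A *\<^sub>v vec n (\<lambda>_. 1) = d \<cdot>\<^sub>v vec n (\<lambda>_. 1)"
    and small: "\<And>i. 1 \<le> i \<Longrightarrow> i < n \<Longrightarrow> ls ! i \<le> lam"
    and lamd: "lam < d"
    and x: "x \<in> carrier_vec n"
  shows "x \<bullet> (A *\<^sub>v x) \<le> d * (x \<bullet> vec n (\<lambda>_. 1))^2 / n + lam * (x \<bullet> x - (x \<bullet> vec n (\<lambda>_. 1))^2 / n)"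
proof -
  define one :: "real vec" where "one = vec n (\<lambda>_. 1)"
  have one: "one \<in> carrier_vec n" by (simp add: one_def)
  obtain U where U: "U \<in> carrier_mat n n" and UU: "transpose_mat U * U = 1\<^sub>m n"
    and UD: "transpose_mat U * A * U = dmat n ls" using spectral[OF A sym cp] by blast
  have UTc: "transpose_mat U \<in> carrier_mat n n" using U by simp
  have UUt: "U * transpose_mat U = 1\<^sub>m n" by (rule mat_mult_left_right_inverse[OF UTc U UU])
  have F3: "(transpose_mat U *\<^sub>v v) \<bullet> (transpose_mat U *\<^sub>v w) = v \<bullet> w"
    if v: "v \<in> carrier_vec n" and w: "w \<in> carrier_vec n" for v w
  proof -
    have "(transpose_mat U *\<^sub>v v) \<bullet> (transpose_mat U *\<^sub>v w) = v \<bullet> (U *\<^sub>v (transpose_mat U *\<^sub>v w))"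
      by (rule transpose_vec_mult_scalar[OF U], use w UTc in auto, use v in auto)
    also have "U *\<^sub>v (transpose_mat U *\<^sub>v w) = (U * transpose_mat U) *\<^sub>v w"
      by (rule assoc_mult_mat_vec[OF U UTc w, symmetric])
    finally show ?thesis using UUt w by simp
  qed
  have F2: "dmat n ls *\<^sub>v (transpose_mat U *\<^sub>v v) = transpose_mat U *\<^sub>v (A *\<^sub>v v)"
    if v: "v \<in> carrier_vec n" for v
  proof -
    have "dmat n ls *\<^sub>v (transpose_mat U *\<^sub>v v) = (transpose_mat U * A * U) *\<^sub>v (transpose_mat U *\<^sub>v v)"
      by (simp add: UD)
    also have "\<dots> = (transpose_mat U * A) *\<^sub>v (U *\<^sub>v (transpose_mat U *\<^sub>v v))"
      by (rule assoc_mult_mat_vec[OF mult_carrier_mat[OF UTc A] U], use UTc v in simp)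
    also have "U *\<^sub>v (transpose_mat U *\<^sub>v v) = v"
      using assoc_mult_mat_vec[OF U UTc v] UUt v by simp
    also have "(transpose_mat U * A) *\<^sub>v v = transpose_mat U *\<^sub>v (A *\<^sub>v v)"
      by (rule assoc_mult_mat_vec[OF UTc A v])
    finally show ?thesis .
  qed
  define y where "y = transpose_mat U *\<^sub>v x"
  define z where "z = transpose_mat U *\<^sub>v one"
  have y: "y \<in> carrier_vec n" and z: "z \<in> carrier_vec n" using UTc x one by (auto simp: y_def z_def)
  have Dz: "dmat n ls *\<^sub>v z = d \<cdot>\<^sub>v z"
    unfolding z_def F2[OF one] using reg UTc one by (simp add: one_def mult_mat_vec)
  have zi: "z $ i = 0" if i: "1 \<le> i" "i < n" for i
  proof -
    have "ls ! i * z $ i = d * z $ i"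
      using arg_cong[OF Dz, of "\<lambda>v. v $ i"] dmat_mult_vec_index[OF z i(2)] i z by simp
    hence "(ls ! i - d) * z $ i = 0" by (simp add: algebra_simps)
    moreover have "ls ! i - d \<noteq> 0" using small[OF i] lamd by simp
    ultimately show ?thesis by simp
  qed
  have sum0: "(\<Sum>i\<in>{0..<n}. f i) = f 0 + (\<Sum>i\<in>{1..<n}. f i)" for f :: "nat \<Rightarrow> real"
    using sum.atLeast_Suc_lessThan[OF n, of f] by simp
  have zz: "z $ 0 * z $ 0 = n"
  proof -
    have "z \<bullet> z = one \<bullet> one" unfolding z_def by (rule F3[OF one one])
    also have "one \<bullet> one = n" by (simp add: one_def scalar_prod_def)
    also have "z \<bullet> z = z $ 0 * z $ 0" using z zi by (simp add: scalar_prod_def sum0)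
    finally show ?thesis .
  qed
  have yz: "y $ 0 * z $ 0 = x \<bullet> one"
  proof -
    have "y \<bullet> z = x \<bullet> one" unfolding y_def z_def by (rule F3[OF x one])
    moreover have "y \<bullet> z = y $ 0 * z $ 0" using z zi by (simp add: scalar_prod_def sum0)
    ultimately show ?thesis by simp
  qed
  have y0: "y $ 0 ^ 2 = (x \<bullet> one)^2 / n"
  proof -
    have "(x \<bullet> one)^2 = y $ 0 ^ 2 * (z $ 0 * z $ 0)" unfolding yz[symmetric] by (simp add: power2_eq_square)
    thus ?thesis using zz n by simp
  qed
  have ls0: "ls ! 0 = d"
  proof -
    have "ls ! 0 * z $ 0 = d * z $ 0"
      using arg_cong[OF Dz, of "\<lambda>v. v $ 0"] dmat_mult_vec_index[OF z n] n z by simp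
    moreover have "z $ 0 \<noteq> 0" using zz n by auto
    ultimately show ?thesis by simp
  qed
  have yy: "y \<bullet> y = x \<bullet> x" unfolding y_def by (rule F3[OF x x])
  have "x \<bullet> (A *\<^sub>v x) = y \<bullet> (dmat n ls *\<^sub>v y)"
    unfolding y_def F2[OF x] by (rule F3[OF x, symmetric], use A x in simp)
  also have "\<dots> = (\<Sum>i\<in>{0..<n}. ls ! i * (y $ i)^2)"
  proof -
    have dy: "dim_vec (dmat n ls *\<^sub>v y) = n" by (simp add: dmat_def)
    show ?thesis unfolding scalar_prod_def dy
      by (rule sum.cong, simp, use y in \<open>simp add: dmat_mult_vec_index[OF y] power2_eq_square\<close>)
  qed
  also have "\<dots> = d * y $ 0 ^ 2 + (\<Sum>i\<in>{1..<n}. ls ! i * (y $ i)^2)" by (simp add: sum0 ls0)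
  also have "(\<Sum>i\<in>{1..<n}. ls ! i * (y $ i)^2) \<le> (\<Sum>i\<in>{1..<n}. lam * (y $ i)^2)"
    by (rule sum_mono, rule mult_right_mono, auto intro: small)
  also have "(\<Sum>i\<in>{1..<n}. lam * (y $ i)^2) = lam * (y \<bullet> y - y $ 0 ^ 2)"
    using y by (simp add: scalar_prod_def sum0 sum_distrib_left power2_eq_square)
  finally show ?thesis unfolding yy y0 one_def by simp
qed

lemma adj_quad:
  assumes sg: "simple_graph n E" and S: "S \<subseteq> {0..<n}"
  shows "vec n (\<lambda>i. if i \<in> S then 1 else 0) \<bullet> (adj_mat n E *\<^sub>v vec n (\<lambda>i. if i \<in> S then 1 else 0))
     = (\<Sum>u\<in>S. real (card (nbhd E u \<inter> S)))"
proof -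
  define x :: "real vec" where "x = vec n (\<lambda>i. if i \<in> S then 1 else 0)"
  have "x \<bullet> (adj_mat n E *\<^sub>v x) = (\<Sum>i\<in>{0..<n}. (if i \<in> S then 1 else 0) *
      (\<Sum>j\<in>{0..<n}. (if E i j then 1 else 0) * (if j \<in> S then 1 else 0)))"
    by (simp add: x_def adj_mat_def scalar_prod_def row_def)
  also have "\<dots> = (\<Sum>i\<in>S. (\<Sum>j\<in>{0..<n}. (if E i j \<and> j \<in> S then 1 else 0)))"
  proof -
    have "(\<Sum>i\<in>{0..<n}. (if i \<in> S then 1 else 0) *
      (\<Sum>j\<in>{0..<n}. (if E i j then 1 else 0) * (if j \<in> S then 1 else 0))) =
      (\<Sum>i\<in>{0..<n}. if i \<in> S then (\<Sum>j\<in>{0..<n}. (if E i j \<and> j \<in> S then 1 else 0)) else (0::real))"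
      by (rule sum.cong) (auto intro!: sum.cong)
    also have "\<dots> = (\<Sum>i\<in>S. (\<Sum>j\<in>{0..<n}. (if E i j \<and> j \<in> S then 1 else 0)))"
      using S by (simp add: sum.If_cases Int_absorb1)
    finally show ?thesis .
  qed
  also have "\<dots> = (\<Sum>u\<in>S. real (card (nbhd E u \<inter> S)))"
  proof (rule sum.cong)
    fix u assume "u \<in> S"
    have "nbhd E u \<inter> S = {j \<in> {0..<n}. E u j \<and> j \<in> S}" using S by (auto simp: nbhd_def)
    thus "(\<Sum>j\<in>{0..<n}. (if E u j \<and> j \<in> S then 1 else 0)) = real (card (nbhd E u \<inter> S))"
      by (simp add: sum.If_cases Int_def)
  qed simp
  finally show ?thesis unfolding x_def .
qed

lemma adj_reg:
  assumes sg: "simple_graph n E" and reg: "regular n E d"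
  shows "adj_mat n E *\<^sub>v vec n (\<lambda>_. 1) = real d \<cdot>\<^sub>v vec n (\<lambda>_. 1)"
proof (rule eq_vecI)
  fix i assume "i < dim_vec (real d \<cdot>\<^sub>v vec n (\<lambda>_. 1 :: real))"
  hence i: "i < n" by simp
  have "nbhd E i = {j \<in> {0..<n}. E i j}" using sg unfolding simple_graph_def nbhd_def by auto
  hence "card {j \<in> {0..<n}. E i j} = d" using reg i unfolding regular_def by metis
  thus "(adj_mat n E *\<^sub>v vec n (\<lambda>_. 1)) $ i = (real d \<cdot>\<^sub>v vec n (\<lambda>_. 1)) $ i"
    using i by (simp add: adj_mat_def scalar_prod_def row_def sum.If_cases Int_def)
qed (simp add: adj_mat_def)

lemma adj_sym:
  assumes sg: "simple_graph n E"
  shows "transpose_mat (adj_mat n E) = adj_mat n E"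
  using sg unfolding simple_graph_def by (intro eq_matI) (auto simp: adj_mat_def)

lemma stage_Suc_mono: "(boot_step n r E ^^ i) A \<subseteq> (boot_step n r E ^^ Suc i) A"
  by (auto simp: boot_step_def)

lemma stage_mono: "i \<le> j \<Longrightarrow> (boot_step n r E ^^ i) A \<subseteq> (boot_step n r E ^^ j) A"
  by (rule lift_Suc_mono_le[of "\<lambda>i. (boot_step n r E ^^ i) A"], rule stage_Suc_mono)

lemma stage_sub: "A \<subseteq> {0..<n} \<Longrightarrow> (boot_step n r E ^^ i) A \<subseteq> {0..<n}"
  by (induct i) (auto simp: boot_step_def)

lemma finite_in_stage:
  assumes "finite F" "F \<subseteq> boot_closure n r E A"
  shows "\<exists>k. F \<subseteq> (boot_step n r E ^^ k) A"
  using assms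
proof (induct F rule: finite_induct)
  case empty thus ?case by auto
next
  case (insert x F)
  then obtain k where k: "F \<subseteq> (boot_step n r E ^^ k) A" by auto
  from insert(4) obtain i where i: "x \<in> (boot_step n r E ^^ i) A" by (auto simp: boot_closure_def)
  have "F \<subseteq> (boot_step n r E ^^ max i k) A" using k stage_mono[of k "max i k" n r E A] by auto
  moreover have "x \<in> (boot_step n r E ^^ max i k) A" using i stage_mono[of i "max i k" n r E A] by auto
  ultimately show ?case by blast
qed

lemma closure_closed:
  assumes v: "v < n" and nb: "finite (nbhd E v)" and notin: "v \<notin> boot_closure n r E A"
  shows "card (nbhd E v \<inter> boot_closure n r E A) < r"
proof (rule ccontr)
  assume "\<not> ?thesis"
  hence ge: "card (nbhd E v \<inter> boot_closure n r E A) \<ge> r" by simp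
  obtain k where k: "nbhd E v \<inter> boot_closure n r E A \<subseteq> (boot_step n r E ^^ k) A"
    using finite_in_stage[of "nbhd E v \<inter> boot_closure n r E A" n r E A] nb by auto
  hence "nbhd E v \<inter> boot_closure n r E A \<subseteq> nbhd E v \<inter> (boot_step n r E ^^ k) A" by auto
  hence "card (nbhd E v \<inter> boot_closure n r E A) \<le> card (nbhd E v \<inter> (boot_step n r E ^^ k) A)"
    by (rule card_mono[rotated]) (use nb in auto)
  with ge have "v \<in> (boot_step n r E ^^ Suc k) A" using v by (auto simp: boot_step_def)
  thus False using notin unfolding boot_closure_def by blast
qed

theorem lemma7:
  fixes n d r :: nat and lam \<delta> :: real and E :: "nat \<Rightarrow> nat \<Rightarrow> bool" and A :: "nat set"
  assumes "0 < \<delta>" "\<delta> < 1" "r \<ge> 2"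
    and "nd_lambda_graph n d lam E"
    and "lam < \<delta> * real d"
    and "A \<subseteq> {0..<n}"
    and "real (card A) > (real r - 1) * real n / ((1 - \<delta>) * real d)"
  shows "contagious n r E A"
proof -
  let ?B = "boot_closure n r E A"
  from assms(4) have sg: "simple_graph n E" and reg: "regular n E d" and
    ex: "\<exists>ls :: real list. length ls = n \<and> sorted_wrt (\<ge>) ls \<and>
        char_poly (adj_mat n E) = (\<Prod>a\<leftarrow>ls. [:- a, 1:]) \<and>
        ls ! 0 = real d \<and>
        (\<forall>i. 1 \<le> i \<and> i < n \<longrightarrow> \<bar>ls ! i\<bar> \<le> lam)"
    unfolding nd_lambda_graph_def by auto
  obtain ls :: "real list" where cp: "char_poly (adj_mat n E) = (\<Prod>a\<leftarrow>ls. [:- a, 1:])"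
    and small: "\<And>i. 1 \<le> i \<Longrightarrow> i < n \<Longrightarrow> \<bar>ls ! i\<bar> \<le> lam" using ex by blast
  have Bsub: "?B \<subseteq> {0..<n}" using stage_sub[OF assms(6)] by (auto simp: boot_closure_def)
  have AB: "A \<subseteq> ?B" unfolding boot_closure_def
    by (rule subset_trans[OF _ UN_upper[of 0]]) auto
  have finB: "finite ?B" using Bsub finite_subset by blast
  have cardAB: "card A \<le> card ?B" by (rule card_mono[OF finB AB])
  have rhs0: "(real r - 1) * real n / ((1 - \<delta>) * real d) \<ge> 0"
    using assms(2,3) by (intro divide_nonneg_nonneg mult_nonneg_nonneg) auto
  show ?thesis unfolding contagious_def
  proof (rule ccontr)
    assume neq: "?B \<noteq> {0..<n}"
    define S where "S = {0..<n} - ?B"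
    have S: "S \<subseteq> {0..<n}" and finS: "finite S" by (auto simp: S_def)
    have Sne: "S \<noteq> {}" using neq Bsub by (auto simp: S_def)
    have cardSB: "card S + card ?B = n"
    proof -
      have "card S = card {0..<n} - card ?B" unfolding S_def by (rule card_Diff_subset[OF finB Bsub])
      moreover have "card ?B \<le> n" using card_mono[OF _ Bsub] by simp
      ultimately show ?thesis by simp
    qed
    have cS: "card S > 0" using Sne finS by (simp add: card_gt_0_iff)
    have n: "0 < n" using cardSB cS by simp
    have n2: "2 \<le> n"
    proof (rule ccontr)
      assume "\<not> 2 \<le> n"
      hence n1: "n = 1" using n by simp
      have "card A > 0" using assms(7) rhs0 by linarith
      hence "A \<noteq> {}" by auto
      hence "A = {0..<n}" using assms(6) n1 by auto
      hence "?B = {0..<n}" using AB Bsub by auto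
      thus False using neq by simp
    qed
    have lam0: "0 \<le> lam" using small[of 1] n2 by linarith
    have d: "0 < real d"
    proof (rule ccontr)
      assume "\<not> 0 < real d" hence "real d = 0" by simp
      thus False using assms(5) lam0 by simp
    qed
    have lamd: "lam < real d"
    proof -
      have "\<delta> * real d < 1 * real d" using assms(2) d by (intro mult_strict_right_mono) auto
      thus ?thesis using assms(5) by simp
    qed
    define x :: "real vec" where "x = vec n (\<lambda>i. if i \<in> S then 1 else 0)"
    have x: "x \<in> carrier_vec n" by (simp add: x_def)
    have Ac: "adj_mat n E \<in> carrier_mat n n" by (simp add: adj_mat_def)
    have q: "x \<bullet> (adj_mat n E *\<^sub>v x) \<le> real d * (x \<bullet> vec n (\<lambda>_. 1))^2 / n
        + lam * (x \<bullet> x - (x \<bullet> vec n (\<lambda>_. 1))^2 / n)"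
      by (rule quad_bound[OF Ac adj_sym[OF sg] cp n adj_reg[OF sg reg] _ lamd x])
        (use small in force)
    have xone: "x \<bullet> vec n (\<lambda>_. 1) = real (card S)"
      using S by (simp add: x_def scalar_prod_def sum.If_cases Int_absorb1)
    have xx: "x \<bullet> x = real (card S)"
    proof -
      have "x \<bullet> x = (\<Sum>i\<in>{0..<n}. if i \<in> S then 1 else (0::real))"
        unfolding x_def scalar_prod_def by (rule sum.cong) auto
      thus ?thesis using S by (simp add: sum.If_cases Int_absorb1)
    qed
    have quadS: "x \<bullet> (adj_mat n E *\<^sub>v x) = (\<Sum>u\<in>S. real (card (nbhd E u \<inter> S)))"
      unfolding x_def by (rule adj_quad[OF sg S])
    have each: "real (card (nbhd E u \<inter> S)) \<ge> real d - (real r - 1)" if u: "u \<in> S" for u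
    proof -
      have un: "u < n" "u \<notin> ?B" using u by (auto simp: S_def)
      have Nsub: "nbhd E u \<subseteq> {0..<n}" using sg unfolding simple_graph_def nbhd_def by auto
      have finN: "finite (nbhd E u)" using Nsub finite_subset by blast
      have cN: "card (nbhd E u) = d" using reg un unfolding regular_def by auto
      have lt: "card (nbhd E u \<inter> ?B) < r" by (rule closure_closed[OF un(1) finN un(2)])
      have "nbhd E u = (nbhd E u \<inter> S) \<union> (nbhd E u \<inter> ?B)" using Nsub by (auto simp: S_def)
      moreover have "card ((nbhd E u \<inter> S) \<union> (nbhd E u \<inter> ?B)) = card (nbhd E u \<inter> S) + card (nbhd E u \<inter> ?B)"
        by (rule card_Un_disjoint) (use finN in \<open>auto simp: S_def\<close>)
      ultimately have "card (nbhd E u) = card (nbhd E u \<inter> S) + card (nbhd E u \<inter> ?B)" by simp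
      thus ?thesis using cN lt by linarith
    qed
    have low: "real (card S) * (real d - (real r - 1)) \<le> (\<Sum>u\<in>S. real (card (nbhd E u \<inter> S)))"
      using sum_mono[OF each] by simp
    define s where "s = real (card S)"
    define b where "b = real (card ?B)"
    define nn where "nn = real n"
    have snb: "s + b = nn" using cardSB unfolding s_def b_def nn_def by (metis of_nat_add)
    have s0: "s > 0" using cS by (simp add: s_def)
    have nn0: "nn > 0" using n by (simp add: nn_def)
    have main: "s * (real d - (real r - 1)) \<le> real d * s^2 / nn + lam * (s - s^2 / nn)"
      using q low quadS xone xx unfolding s_def nn_def by simp
    hence "nn * (s * (real d - (real r - 1))) \<le> nn * (real d * s^2 / nn + lam * (s - s^2 / nn))"
      using nn0 by (simp add: mult_left_mono)
    moreover have "nn * (real d * s^2 / nn + lam * (s - s^2 / nn)) = real d * s^2 + lam * (nn * s - s^2)"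
      using nn0 by (simp add: field_simps)
    ultimately have "nn * (s * (real d - (real r - 1))) \<le> real d * s^2 + lam * (nn * s - s^2)" by simp
    moreover have "nn * (s * (real d - (real r - 1))) = s * (nn * (real d - (real r - 1)))" by simp
    moreover have "real d * s^2 + lam * (nn * s - s^2) = s * (real d * s + lam * (nn - s))"
      by (simp add: algebra_simps power2_eq_square)
    ultimately have "s * (nn * (real d - (real r - 1))) \<le> s * (real d * s + lam * (nn - s))" by simp
    hence "nn * (real d - (real r - 1)) \<le> real d * s + lam * (nn - s)"
      using s0 by simp
    hence bound: "(real d - lam) * b \<le> (real r - 1) * nn"
    proof -
      have se: "s = nn - b" using snb by simp
      have "nn * (real d - (real r - 1)) \<le> real d * (nn - b) + lam * (nn - (nn - b))"
        using \<open>nn * (real d - (real r - 1)) \<le> real d * s + lam * (nn - s)\<close> unfolding se .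
      thus ?thesis by (simp add: algebra_simps)
    qed
    have "real (card A) * ((1 - \<delta>) * real d) > (real r - 1) * real n"
      using assms(7) assms(2) d by (simp add: pos_divide_less_eq)
    moreover have "real (card A) * ((1 - \<delta>) * real d) \<le> b * (real d - lam)"
    proof -
      have "real (card A) \<le> b" using cardAB by (simp add: b_def)
      moreover have "(1 - \<delta>) * real d \<le> real d - lam" using assms(5) by (simp add: algebra_simps)
      moreover have "0 \<le> (1 - \<delta>) * real d" using assms(2) d by simp
      ultimately show ?thesis by (intro mult_mono) auto
    qed
    ultimately show False using bound unfolding nn_def by (simp add: mult.commute)
  qed
qed

end
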